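(* Let $\mathbb{H}=\mathbb{H}_S\oplus\mathbb{H}_R^1\oplus\cdots\oplus\mathbb{H}_R^{\mathbf{d}}$ ($\mathbf{d}\le d-1$) with orthogonal projections $\Pi_0,\Pi_1,\dots,\Pi_{\mathbf{d}}$ onto $\mathbb{H}_S,\mathbb{H}_R^1,\dots,\mathbb{H}_R^{\mathbf{d}}$. Fix $\mathbf{j}\in[m]$ and assume that $H_0$, $H_{\mathbf{j}}$, $L_{\mathbf{j}}$, $C_{\mathbf{j}}=\sum_{i=0}^{\mathbf{d}}c_i\Pi_i$ and $D_{\mathbf{j}}=\sum_{i=0}^{\mathbf{d}}a_i\Pi_i$ ($c_i,a_i\in\mathbb{C}$) are simultaneously block-diagonal with respect to this decomposition. Suppose at least one of $\underline c:=\min_{i\in[\mathbf{d}]}(\mathrm{Re}\,c_i-\mathrm{Re}\,c_0)^2>0$ or $\underline a:=\min_{i\in[\mathbf{d}]}(|a_i|-|a_0|)^2>0$ holds. Let $V(\rho)=\sum_{i=1}^{\mathbf{d}}\sqrt{\mathrm{Tr}(\Pi_i\rho)}$. Then: 1. there exist $c_1,c_2>0$ with $\mathbf{d}_0(\rho)/c_2\le V(\rho)\le\sqrt{\mathbf{d}_0(\rho)/c_1}$ for all $\rho\in\mathcal{S}(\mathbb{H})$; 2. there exists $\bar r>0$ such that for every $l\in(0,\bar r)$ there is $c(l)\in(0,(\underline c+\underline a)/2)$ with $\mathcal{A}_{\mathbf{j}}V(\rho)\le-c(l)V(\rho)$ for all $\rho\in\Lambda_l$. Consequently, there exist $\mu_1,\mu_2,\nu\in\mathcal{K}$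 and $l>0$ with $\mu_1(\mathbf{d}_0(\rho))\le V(\rho)\le\mu_2(\mathbf{d}_0(\rho))$ and $\mathcal{A}_{\mathbf{j}}V(\rho)\le-\nu(\mathbf{d}_0(\rho))$ on $\bar\Lambda_l$.
   Context: Quantum setting: $\mathbb{H}$ Hilbert space of finite dimension $d$, $\mathcal{S}(\mathbb{H})$ density matrices. For $C\in\mathcal{B}(\mathbb{H})$: $\mathcal{I}_C(A)=CAC^*-\tfrac12\{C^*C,A\}$, $v_C(A)=\mathrm{Tr}[CAC^*]$, $\mathcal{J}_C(A)=CAC^*/v_C(A)$. For $k\in[m]$, with self-adjoint $H_0,H_k$ and $L_k,C_k,D_k\in\mathcal{B}(\mathbb{H})$: $\mathcal{F}_k(A)=-{\rm i}[H_0+H_k,A]+\mathcal{I}_{L_k}(A)+\mathcal{I}_{C_k}(A)+\mathcal{I}_{D_k}(A)$, $\mathcal{G}_k(A)=C_kA+AC_k^*-\mathrm{Tr}[(C_k+C_k^* )A]A$, $\mathcal{H}_k(A)=\mathcal{J}_{D_k}(A)-A$. Generator of the $k$-th subsystem (SME ${\rm d}\rho=\mathcal{F}_k{\rm d}t+\mathcal{G}_k{\rm d}W+\int\mathcal{H}_k\mathbf{1}_{\{0\le x\le v_{D_k}\}}\tilde N$) on functions $V$ differentiable where needed: $\mathcal{A}_kV(\rho)=DV(\rho)[\mathcal{F}_k(\rho)]+\tfrac12D^2V(\rho)[\mathcal{G}_k(\rho),\mathcal{G}_k(\rho)]+\big(V(\mathcal{J}_{D_k}(\rho))-V(\rho)-DV(\rho)[\mathcal{H}_k(\rho)]\big)v_{D_k}(\rho)$.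 $\mathcal{I}(\mathbb{H}_S)=\{\rho\in\mathcal{S}(\mathbb{H}):\mathrm{Tr}(\Pi_0\rho)=1\}$, $\mathbf{d}_0(\rho)=\|\rho-\Pi_0\rho\Pi_0\|$ for a fixed matrix norm, $\Lambda_l=\{\rho\in\mathcal{S}(\mathbb{H}):\mathbf{d}_0(\rho)<l\}$, $\bar\Lambda_l$ its closure. $\mathcal{K}$: continuous non-decreasing $\mu:\mathbb{R}_+\to\mathbb{R}_+$, $\mu(0)=0$, $\mu(r)>0$ for $r>0$. *)

theory Defs
  imports "HOL-Analysis.Analysis"
begin

text \<open>Operators on the d-dimensional Hilbert space are complex d x d matrices,
  d = CARD('n).\<close>
type_synonym 'n op = "complex ^ 'n ^ 'n"

definition madj :: "'n::finite op \<Rightarrow> 'n op" where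
  "madj A = (\<chi> i j. cnj (A $ j $ i))"

definition mtr :: "'n::finite op \<Rightarrow> complex" where
  "mtr A = (\<Sum>i\<in>UNIV. A $ i $ i)"

definition cmult :: "complex \<Rightarrow> 'n::finite op \<Rightarrow> 'n op" where
  "cmult c A = (\<chi> i j. c * A $ i $ j)"

definition is_density :: "'n::finite op \<Rightarrow> bool" where
  "is_density \<rho> \<longleftrightarrow> madj \<rho> = \<rho> \<and>
     (\<forall>v::complex^'n. 0 \<le> Re (\<Sum>i\<in>UNIV. \<Sum>j\<in>UNIV. cnj (v $ i) * \<rho> $ i $ j * v $ j)) \<and>
     mtr \<rho> = 1"

definition is_op_norm :: "('n::finite op \<Rightarrow> real) \<Rightarrow> bool" where
  "is_op_norm N \<longleftrightarrow> (\<forall>A. 0 \<le> N A) \<and> (\<forall>A. N A = 0 \<longleftrightarrow> A = 0) \<and>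
     (\<forall>A B. N (A + B) \<le> N A + N B) \<and> (\<forall>c A. N (cmult c A) = cmod c * N A)"

definition diss :: "'n::finite op \<Rightarrow> 'n op \<Rightarrow> 'n op" where
  "diss C A = C ** A ** madj C - cmult (1/2) (madj C ** C ** A + A ** madj C ** C)"

definition vC :: "'n::finite op \<Rightarrow> 'n op \<Rightarrow> complex" where
  "vC C A = mtr (C ** A ** madj C)"

definition JC :: "'n::finite op \<Rightarrow> 'n op \<Rightarrow> 'n op" where
  "JC C A = cmult (1 / vC C A) (C ** A ** madj C)"

definition Fop :: "'n::finite op \<Rightarrow> 'n op \<Rightarrow> 'n op \<Rightarrow> 'n op \<Rightarrow> 'n op \<Rightarrow> 'n op \<Rightarrow> 'n op" where
  "Fop H0 H L C D A = cmult (- \<i>) ((H0 + H) ** A - A ** (H0 + H)) + diss L A + diss C A + diss D A"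

definition Gop :: "'n::finite op \<Rightarrow> 'n op \<Rightarrow> 'n op" where
  "Gop C A = C ** A + A ** madj C - cmult (mtr ((C + madj C) ** A)) A"

definition Hop :: "'n::finite op \<Rightarrow> 'n op \<Rightarrow> 'n op" where
  "Hop D A = JC D A - A"

text \<open>First and second derivative of V at rho in direction X
  (for differentiable V these are DV(rho)[X] and D^2V(rho)[X,X]).\<close>
definition DV :: "('n::finite op \<Rightarrow> real) \<Rightarrow> 'n op \<Rightarrow> 'n op \<Rightarrow> real" where
  "DV V \<rho> X = deriv (\<lambda>t. V (\<rho> + t *\<^sub>R X)) 0"

definition D2V :: "('n::finite op \<Rightarrow> real) \<Rightarrow> 'n op \<Rightarrow> 'n op \<Rightarrow> real" where
  "D2V V \<rho> X = deriv (deriv (\<lambda>t. V (\<rho> + t *\<^sub>R X))) 0"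

definition gen :: "'n::finite op \<Rightarrow> 'n op \<Rightarrow> 'n op \<Rightarrow> 'n op \<Rightarrow> 'n op \<Rightarrow>
    ('n op \<Rightarrow> real) \<Rightarrow> 'n op \<Rightarrow> real" where
  "gen H0 H L C D V \<rho> =
     DV V \<rho> (Fop H0 H L C D \<rho>) + 1/2 * D2V V \<rho> (Gop C \<rho>)
     + (V (JC D \<rho>) - V \<rho> - DV V \<rho> (Hop D \<rho>)) * Re (vC D \<rho>)"

definition classK :: "(real \<Rightarrow> real) \<Rightarrow> bool" where
  "classK \<mu> \<longleftrightarrow> continuous_on {0..} \<mu> \<and> mono_on {0..} \<mu> \<and> (\<forall>r\<ge>0. 0 \<le> \<mu> r)
     \<and> \<mu> 0 = 0 \<and> (\<forall>r>0. 0 < \<mu> r)"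

end

theory Submission
  imports Defs
begin


lemma scC: "r *\<^sub>R (z::complex) = complex_of_real r * z"
  by (simp add: scaleR_conv_of_real)

lemma mtr_add[simp]: "mtr (A + B) = mtr A + mtr B"
  by (simp add: mtr_def sum.distrib)
lemma mtr_diff[simp]: "mtr (A - B) = mtr A - mtr B"
  by (simp add: mtr_def sum_subtractf)
lemma mtr_cmult[simp]: "mtr (cmult c A) = c * mtr A"
  by (simp add: mtr_def cmult_def sum_distrib_left)
lemma mtr_scaleR[simp]: "mtr (r *\<^sub>R A) = of_real r * mtr A"
  by (simp add: mtr_def sum_distrib_left scC)
lemma mtr_zero[simp]: "mtr 0 = 0"
  by (simp add: mtr_def)
lemma mtr_sum: "finite S \<Longrightarrow> mtr (sum f S) = (\<Sum>i\<in>S. mtr (f i))"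
  by (induction S rule: finite_induct) auto
lemma mtr_comm: "mtr (A ** B) = mtr (B ** A)"
  unfolding mtr_def matrix_matrix_mult_def
  by (simp, subst sum.swap, simp add: mult.commute)
lemma mtr_madj: "mtr (madj A) = cnj (mtr A)"
  by (simp add: mtr_def madj_def)

lemma madj_mult: "madj (A ** B) = madj B ** madj A"
  by (simp add: madj_def matrix_matrix_mult_def vec_eq_iff mult.commute)
lemma madj_madj[simp]: "madj (madj A) = A"
  by (simp add: madj_def vec_eq_iff)
lemma madj_add[simp]: "madj (A + B) = madj A + madj B"
  by (simp add: madj_def vec_eq_iff)
lemma madj_diff[simp]: "madj (A - B) = madj A - madj B"
  by (simp add: madj_def vec_eq_iff)
lemma madj_cmult[simp]: "madj (cmult c A) = cmult (cnj c) (madj A)"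
  by (simp add: madj_def cmult_def vec_eq_iff)
lemma madj_zero[simp]: "madj 0 = 0"
  by (simp add: madj_def vec_eq_iff)
lemma madj_sum: "finite S \<Longrightarrow> madj (sum f S) = (\<Sum>i\<in>S. madj (f i))"
  by (induction S rule: finite_induct) auto
lemma madj_mat1[simp]: "madj (mat 1) = mat 1"
  by (simp add: madj_def mat_def vec_eq_iff)

lemma mm_cmult_left[simp]: "cmult c A ** B = cmult c (A ** B)"
  by (simp add: cmult_def matrix_matrix_mult_def vec_eq_iff sum_distrib_left mult.assoc)
lemma mm_cmult_right[simp]: "A ** cmult c B = cmult c (A ** B)"
  by (simp add: cmult_def matrix_matrix_mult_def vec_eq_iff sum_distrib_left mult.left_commute)
lemma mm_add_right: "(A + B) ** C = A ** C + B ** (C::'n::finite op)"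
  by (simp add: matrix_matrix_mult_def vec_eq_iff sum.distrib distrib_right)
lemma mm_diff_right: "(A - B) ** C = A ** C - B ** (C::'n::finite op)"
  by (simp add: matrix_matrix_mult_def vec_eq_iff sum_subtractf left_diff_distrib)
lemma mm_diff_left: "C ** (A - B) = C ** A - C ** (B::'n::finite op)"
  by (simp add: matrix_matrix_mult_def vec_eq_iff sum_subtractf right_diff_distrib)
lemma mm_scaleR_right: "A ** (r *\<^sub>R B) = r *\<^sub>R (A ** (B::'n::finite op))"
  by (simp add: matrix_matrix_mult_def vec_eq_iff sum_distrib_left scC mult.left_commute)
lemma mm_sum_left: "finite S \<Longrightarrow> (sum f S) ** (B::'n::finite op) = (\<Sum>i\<in>S. f i ** B)"
  by (induction S rule: finite_induct) (auto simp: mm_add_right)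
lemma mm_sum_right: "finite S \<Longrightarrow> (B::'n::finite op) ** (sum f S) = (\<Sum>i\<in>S. B ** f i)"
  by (induction S rule: finite_induct) (auto simp: matrix_add_ldistrib)
lemma cmult_add: "cmult c (A + B) = cmult c A + cmult c B"
  by (simp add: cmult_def vec_eq_iff distrib_left)
lemma cmult_cmult[simp]: "cmult c (cmult d A) = cmult (c * d) A"
  by (simp add: cmult_def vec_eq_iff)
lemma cmult_1[simp]: "cmult 1 A = A"
  by (simp add: cmult_def vec_eq_iff)
lemma cmult_0[simp]: "cmult 0 A = 0"
  by (simp add: cmult_def vec_eq_iff)
lemma cmult_zero[simp]: "cmult c 0 = 0"
  by (simp add: cmult_def vec_eq_iff)
lemma cmult_of_real: "cmult (of_real r) A = r *\<^sub>R A"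
  by (simp add: cmult_def vec_eq_iff scC)




context
  fixes P :: "nat \<Rightarrow> 'n::finite op" and dd :: nat
  assumes P_herm: "\<forall>i\<le>dd. madj (P i) = P i"
    and P_idem: "\<forall>i\<le>dd. P i ** P i = P i"
    and P_orth: "\<forall>i\<le>dd. \<forall>k\<le>dd. i \<noteq> k \<longrightarrow> P i ** P k = 0"
    and P_sum: "(\<Sum>i\<le>dd. P i) = mat 1"
begin

lemma PP: "i \<le> dd \<Longrightarrow> k \<le> dd \<Longrightarrow> P i ** P k = (if i = k then P k else 0)"
  using P_idem P_orth by auto

lemma blk_right:
  assumes "k \<le> dd"
  shows "(\<Sum>l\<le>dd. cmult (x l) (P l)) ** P k = cmult (x k) (P k)"
proof -
  have "(\<Sum>l\<le>dd. cmult (x l) (P l)) ** P k = (\<Sum>l\<le>dd. cmult (x l) (P l ** P k))"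
    by (simp add: mm_sum_left)
  also have "\<dots> = (\<Sum>l\<le>dd. (if l = k then cmult (x k) (P k) else 0))"
    by (rule sum.cong) (auto simp: PP assms)
  also have "\<dots> = cmult (x k) (P k)" using assms by (simp add: sum.delta)
  finally show ?thesis .
qed

lemma blk_left:
  assumes "k \<le> dd"
  shows "P k ** (\<Sum>l\<le>dd. cmult (x l) (P l)) = cmult (x k) (P k)"
proof -
  have "P k ** (\<Sum>l\<le>dd. cmult (x l) (P l)) = (\<Sum>l\<le>dd. cmult (x l) (P k ** P l))"
    by (simp add: mm_sum_right)
  also have "\<dots> = (\<Sum>l\<le>dd. (if l = k then cmult (x k) (P k) else 0))"
    by (rule sum.cong) (auto simp: PP assms)
  also have "\<dots> = cmult (x k) (P k)" using assms by (simp add: sum.delta)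
  finally show ?thesis .
qed

lemma blk_adj: "madj (\<Sum>l\<le>dd. cmult (x l) (P l)) = (\<Sum>l\<le>dd. cmult (cnj (x l)) (P l))"
  by (simp add: madj_sum P_herm)

lemma tr_split: "mtr A = (\<Sum>k\<le>dd. mtr (P k ** A))"
proof -
  have "mtr A = mtr ((\<Sum>i\<le>dd. P i) ** A)" by (simp add: P_sum)
  also have "\<dots> = (\<Sum>k\<le>dd. mtr (P k ** A))" by (simp add: mm_sum_left mtr_sum)
  finally show ?thesis .
qed

lemma tr_real:
  assumes "madj \<rho> = \<rho>" "k \<le> dd"
  shows "mtr (P k ** \<rho>) = of_real (Re (mtr (P k ** \<rho>)))"
proof -
  have "cnj (mtr (P k ** \<rho>)) = mtr (madj (P k ** \<rho>))" by (simp add: mtr_madj)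
  also have "\<dots> = mtr (\<rho> ** P k)" using assms P_herm by (simp add: madj_mult)
  also have "\<dots> = mtr (P k ** \<rho>)" by (rule mtr_comm)
  finally have "cnj (mtr (P k ** \<rho>)) = mtr (P k ** \<rho>)" .
  then show ?thesis by (simp add: complex_eq_iff)
qed

lemma comm_adj:
  assumes "k \<le> dd" "P k ** X = X ** P k"
  shows "P k ** madj X = madj X ** P k"
proof -
  have h: "madj (P k) = P k" using P_herm assms by simp
  have "P k ** madj X = madj (X ** P k)" by (simp add: madj_mult h)
  also have "\<dots> = madj (P k ** X)" using assms by simp
  also have "\<dots> = madj X ** P k" by (simp add: madj_mult h)
  finally show ?thesis .
qed

lemma diss_tr:
  assumes "k \<le> dd" "P k ** X = X ** P k"
  shows "mtr (P k ** diss X \<rho>) = 0"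
proof -
  note ca = comm_adj[OF assms]
  have 1: "mtr (P k ** (X ** \<rho> ** madj X)) = mtr ((madj X ** X) ** (P k ** \<rho>))"
  proof -
    have "mtr (P k ** (X ** \<rho> ** madj X)) = mtr (madj X ** (P k ** X ** \<rho>))"
      by (metis matrix_mul_assoc mtr_comm)
    also have "\<dots> = mtr ((madj X ** X) ** (P k ** \<rho>))"
      using assms by (metis matrix_mul_assoc)
    finally show ?thesis .
  qed
  have 2: "mtr (P k ** (madj X ** X ** \<rho>)) = mtr ((madj X ** X) ** (P k ** \<rho>))"
    using ca assms by (metis matrix_mul_assoc)
  have 3: "mtr (P k ** (\<rho> ** madj X ** X)) = mtr ((madj X ** X) ** (P k ** \<rho>))"
    by (metis matrix_mul_assoc mtr_comm)
  show ?thesis unfolding diss_def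
    by (simp add: mm_diff_left matrix_add_ldistrib 1 2 3)
qed

lemma ham_tr:
  assumes "k \<le> dd" "P k ** H = H ** P k"
  shows "mtr (P k ** (H ** \<rho> - \<rho> ** H)) = 0"
proof -
  have "mtr (P k ** (\<rho> ** H)) = mtr (P k ** (H ** \<rho>))"
    using assms by (metis matrix_mul_assoc mtr_comm)
  thus ?thesis by (simp add: mm_diff_left)
qed

lemma blk_comm: "k \<le> dd \<Longrightarrow> P k ** (\<Sum>l\<le>dd. cmult (x l) (P l)) = (\<Sum>l\<le>dd. cmult (x l) (P l)) ** P k"
  by (simp add: blk_left blk_right)

lemma tr_F:
  assumes k: "k \<le> dd" and h1: "P k ** H0 = H0 ** P k" and h2: "P k ** H = H ** P k"
    and h3: "P k ** L = L ** P k"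
    and C: "C = (\<Sum>l\<le>dd. cmult (c l) (P l))" and D: "D = (\<Sum>l\<le>dd. cmult (a l) (P l))"
  shows "mtr (P k ** Fop H0 H L C D \<rho>) = 0"
proof -
  have hh: "P k ** (H0 + H) = (H0 + H) ** P k"
    using h1 h2 by (simp add: matrix_add_ldistrib mm_add_right)
  show ?thesis unfolding Fop_def
    using ham_tr[OF k hh] diss_tr[OF k h3] diss_tr[OF k blk_comm[OF k, of c]]
      diss_tr[OF k blk_comm[OF k, of a]] C D
    by (simp add: matrix_add_ldistrib)
qed

lemma tr_G:
  assumes k: "k \<le> dd" and rh: "madj \<rho> = \<rho>"
    and C: "C = (\<Sum>l\<le>dd. cmult (c l) (P l))"
  shows "Re (mtr (P k ** Gop C \<rho>)) =
     2 * Re (mtr (P k ** \<rho>)) * (Re (c k) - (\<Sum>l\<le>dd. Re (c l) * Re (mtr (P l ** \<rho>))))"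
proof -
  define z where "z l = mtr (P l ** \<rho>)" for l
  have zr: "\<And>l. l \<le> dd \<Longrightarrow> z l = of_real (Re (z l))" unfolding z_def using tr_real rh by blast
  have adjC: "madj C = (\<Sum>l\<le>dd. cmult (cnj (c l)) (P l))" using C blk_adj by simp
  have t1: "mtr (P k ** (C ** \<rho>)) = c k * z k"
    using blk_left[OF k, of c] C by (simp add: matrix_mul_assoc z_def)
  have t2: "mtr (P k ** (\<rho> ** madj C)) = cnj (c k) * z k"
  proof -
    have "mtr (P k ** (\<rho> ** madj C)) = mtr (madj C ** P k ** \<rho>)"
      by (metis matrix_mul_assoc mtr_comm)
    thus ?thesis using blk_right[OF k, of "\<lambda>l. cnj (c l)"] adjC by (simp add: z_def)
  qed
  have t3: "mtr ((C + madj C) ** \<rho>) = (\<Sum>l\<le>dd. (c l + cnj (c l)) * z l)"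
  proof -
    have "mtr ((C + madj C) ** \<rho>) = (\<Sum>l\<le>dd. mtr (P l ** ((C + madj C) ** \<rho>)))"
      by (rule tr_split)
    also have "\<dots> = (\<Sum>l\<le>dd. (c l + cnj (c l)) * z l)"
    proof (rule sum.cong)
      fix l assume "l \<in> {..dd}" hence l: "l \<le> dd" by simp
      show "mtr (P l ** ((C + madj C) ** \<rho>)) = (c l + cnj (c l)) * z l"
        using blk_left[OF l, of c] blk_left[OF l, of "\<lambda>l. cnj (c l)"] C adjC
        by (simp add: matrix_mul_assoc z_def matrix_add_ldistrib mm_add_right distrib_right)
    qed simp
    finally show ?thesis .
  qed
  have "mtr (P k ** Gop C \<rho>) = c k * z k + cnj (c k) * z k - (\<Sum>l\<le>dd. (c l + cnj (c l)) * z l) * z k"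
    unfolding Gop_def using t1 t2 t3 by (simp add: matrix_add_ldistrib mm_diff_left z_def)
  also have "\<dots> = of_real (2 * Re (z k) * (Re (c k) - (\<Sum>l\<le>dd. Re (c l) * Re (z l))))"
  proof -
    have s: "(\<Sum>l\<le>dd. (c l + cnj (c l)) * z l) = of_real (\<Sum>l\<le>dd. 2 * Re (c l) * Re (z l))"
    proof -
      have "(c l + cnj (c l)) * z l = of_real (2 * Re (c l) * Re (z l))" if "l \<in> {..dd}" for l
        using that by (subst zr) (auto simp: complex_add_cnj)
      hence "(\<Sum>l\<le>dd. (c l + cnj (c l)) * z l) = (\<Sum>l\<le>dd. of_real (2 * Re (c l) * Re (z l)))"
        by (intro sum.cong) auto
      thus ?thesis by (simp add: of_real_sum)
    qed
    have e: "c k + cnj (c k) = of_real (2 * Re (c k))" by (simp add: complex_add_cnj)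
    have "c k * z k + cnj (c k) * z k - (\<Sum>l\<le>dd. (c l + cnj (c l)) * z l) * z k
       = ((c k + cnj (c k)) - (\<Sum>l\<le>dd. (c l + cnj (c l)) * z l)) * z k"
      by (simp add: algebra_simps)
    also have "\<dots> = (of_real (2 * Re (c k)) - of_real (\<Sum>l\<le>dd. 2 * Re (c l) * Re (z l))) * of_real (Re (z k))"
      apply (simp only: e s)
      apply (subst zr[OF k])
      by simp
    also have "\<dots> = of_real (2 * Re (z k) * (Re (c k) - (\<Sum>l\<le>dd. Re (c l) * Re (z l))))"
      by (simp add: algebra_simps sum_distrib_left)
    finally show ?thesis .
  qed
  finally show ?thesis by (simp add: z_def)
qed

lemma tr_DrD:
  assumes k: "k \<le> dd" and D: "D = (\<Sum>l\<le>dd. cmult (a l) (P l))"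
  shows "mtr (P k ** (D ** \<rho> ** madj D)) = of_real ((cmod (a k))\<^sup>2) * mtr (P k ** \<rho>)"
proof -
  have adjD: "madj D = (\<Sum>l\<le>dd. cmult (cnj (a l)) (P l))" using D blk_adj by simp
  have "mtr (P k ** (D ** \<rho> ** madj D)) = mtr ((madj D ** (P k ** D)) ** \<rho>)"
    by (metis matrix_mul_assoc mtr_comm)
  also have "\<dots> = cnj (a k) * a k * mtr (P k ** \<rho>)"
    using blk_left[OF k, of a] blk_right[OF k, of "\<lambda>l. cnj (a l)"] D adjD by simp
  finally show ?thesis by (metis complex_norm_square mult.commute)
qed

end



lemma sq_deriv1:
  fixes p g :: real
  assumes "0 \<le> p" "p = 0 \<Longrightarrow> g = 0"
  shows "\<forall>\<^sub>F t in nhds 0. ((\<lambda>t. sqrt (p + t*g)) has_real_derivative g/(2* sqrt(p + t*g))) (at t)"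
proof (cases "p = 0")
  case True
  then show ?thesis using assms by simp
next
  case False
  hence pp: "p > 0" using assms by simp
  have "((\<lambda>t. p + t*g) \<longlongrightarrow> p + 0*g) (nhds 0)"
    by (intro tendsto_intros filterlim_ident)
  hence "\<forall>\<^sub>F t in nhds 0. p + t*g > 0" using pp by (simp add: order_tendstoD(1))
  thus ?thesis
  proof (rule eventually_mono)
    fix t assume "p + t*g > 0"
    thus "((\<lambda>t. sqrt (p + t*g)) has_real_derivative g/(2* sqrt(p + t*g))) (at t)"
      by (auto intro!: derivative_eq_intros simp: field_simps)
  qed
qed

lemma sq_deriv2:
  fixes p g :: real
  assumes "0 \<le> p" "p = 0 \<Longrightarrow> g = 0"
  shows "((\<lambda>t. g/(2* sqrt(p + t*g))) has_real_derivative -(g^2)/(4*p* sqrt p)) (at 0)"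
proof (cases "p = 0")
  case True
  then show ?thesis using assms by simp
next
  case False
  hence pp: "p > 0" using assms by simp
  show ?thesis
    using pp by (auto intro!: derivative_eq_intros simp: field_simps power2_eq_square)
qed

lemma sum_derivs:
  fixes p g :: "nat \<Rightarrow> real"
  assumes fin: "finite I" and nn: "\<And>i. i \<in> I \<Longrightarrow> 0 \<le> p i"
    and z: "\<And>i. i \<in> I \<Longrightarrow> p i = 0 \<Longrightarrow> g i = 0"
  shows "deriv (\<lambda>t. \<Sum>i\<in>I. sqrt (p i + t * g i)) 0 = (\<Sum>i\<in>I. g i / (2 * sqrt (p i)))"
    and "deriv (deriv (\<lambda>t. \<Sum>i\<in>I. sqrt (p i + t * g i))) 0 = (\<Sum>i\<in>I. -((g i)^2 / (4 * p i * sqrt (p i))))"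
proof -
  have ev: "\<forall>\<^sub>F t in nhds 0. \<forall>i\<in>I. ((\<lambda>t. sqrt (p i + t * g i)) has_real_derivative g i/(2* sqrt(p i + t * g i))) (at t)"
    using fin by (intro eventually_ball_finite) (auto intro!: sq_deriv1 nn z)
  have ev2: "\<forall>\<^sub>F t in nhds 0. ((\<lambda>t. \<Sum>i\<in>I. sqrt (p i + t * g i)) has_real_derivative (\<Sum>i\<in>I. g i/(2* sqrt(p i + t * g i)))) (at t)"
    using ev by (rule eventually_mono) (intro DERIV_sum, auto)
  have d: "\<forall>\<^sub>F t in nhds 0. deriv (\<lambda>t. \<Sum>i\<in>I. sqrt (p i + t * g i)) t = (\<Sum>i\<in>I. g i/(2* sqrt(p i + t * g i)))"
    using ev2 by (rule eventually_mono) (rule DERIV_imp_deriv)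
  show "deriv (\<lambda>t. \<Sum>i\<in>I. sqrt (p i + t * g i)) 0 = (\<Sum>i\<in>I. g i / (2 * sqrt (p i)))"
    using eventually_nhds_x_imp_x[OF d] by simp
  have "deriv (deriv (\<lambda>t. \<Sum>i\<in>I. sqrt (p i + t * g i))) 0 = deriv (\<lambda>t. \<Sum>i\<in>I. g i/(2* sqrt(p i + t * g i))) 0"
    by (rule deriv_cong_ev[OF d refl])
  also have "\<dots> = (\<Sum>i\<in>I. -((g i)^2 / (4 * p i * sqrt (p i))))"
  proof (rule DERIV_imp_deriv)
    show "((\<lambda>t. \<Sum>i\<in>I. g i / (2 * sqrt (p i + t * g i))) has_real_derivative (\<Sum>i\<in>I. -((g i)^2 / (4 * p i * sqrt (p i))))) (at 0)"
      apply (intro DERIV_sum)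
      subgoal for i using sq_deriv2[of "p i" "g i"] nn z by auto
      done
  qed
  finally show "deriv (deriv (\<lambda>t. \<Sum>i\<in>I. sqrt (p i + t * g i))) 0 = (\<Sum>i\<in>I. -((g i)^2 / (4 * p i * sqrt (p i))))" .
qed




lemma jt_aux:
  fixes s w a :: real
  assumes "0 < s" "0 < w" "0 \<le> a"
  shows "w^2 * (sqrt (a^2 * s^2 / w^2) - s - (a^2 * s^2/w^2 - s^2)/(2 * s)) = -(1/2) * s * (a - w)^2"
proof -
  have "sqrt (a^2 * s^2 / w^2) = a * s / w"
    using assms by (simp add: real_sqrt_divide real_sqrt_mult)
  thus ?thesis using assms by (simp add: field_simps power2_eq_square)
qed

lemma jt:
  fixes p v a :: real
  assumes "0 \<le> p" "0 < v" "0 \<le> a"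
  shows "v * (sqrt (a^2 * p / v) - sqrt p - (a^2 * p / v - p) / (2 * sqrt p)) = -(1/2) * sqrt p * (a - sqrt v)^2"
proof (cases "p = 0")
  case True then show ?thesis by simp
next
  case False
  hence "0 < sqrt p" using assms by simp
  from jt_aux[OF this _ assms(3), of "sqrt v"] assms show ?thesis by simp
qed

context
  fixes P :: "nat \<Rightarrow> 'n::finite op" and dd :: nat
  assumes P_herm: "\<forall>i\<le>dd. madj (P i) = P i"
    and P_idem: "\<forall>i\<le>dd. P i ** P i = P i"
    and P_orth: "\<forall>i\<le>dd. \<forall>k\<le>dd. i \<noteq> k \<longrightarrow> P i ** P k = 0"
    and P_sum: "(\<Sum>i\<le>dd. P i) = mat 1"
begin

lemma lin_p: "Re (mtr (P i ** (\<rho> + t *\<^sub>R X))) = Re (mtr (P i ** \<rho>)) + t * Re (mtr (P i ** X))"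
  by (simp add: matrix_add_ldistrib mm_scaleR_right)

lemma DV_formula:
  assumes V: "V = (\<lambda>\<rho>. \<Sum>i\<in>{1..dd}. sqrt (Re (mtr (P i ** \<rho>))))"
    and nn: "\<And>i. i \<in> {1..dd} \<Longrightarrow> 0 \<le> Re (mtr (P i ** \<rho>))"
    and z: "\<And>i. i \<in> {1..dd} \<Longrightarrow> Re (mtr (P i ** \<rho>)) = 0 \<Longrightarrow> Re (mtr (P i ** X)) = 0"
  shows "DV V \<rho> X = (\<Sum>i\<in>{1..dd}. Re (mtr (P i ** X)) / (2 * sqrt (Re (mtr (P i ** \<rho>)))))"
    and "D2V V \<rho> X = (\<Sum>i\<in>{1..dd}. -((Re (mtr (P i ** X)))^2 / (4 * Re (mtr (P i ** \<rho>)) * sqrt (Re (mtr (P i ** \<rho>))))))"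
proof -
  have e: "(\<lambda>t. V (\<rho> + t *\<^sub>R X)) = (\<lambda>t. \<Sum>i\<in>{1..dd}. sqrt (Re (mtr (P i ** \<rho>)) + t * Re (mtr (P i ** X))))"
    by (simp add: V lin_p)
  show "DV V \<rho> X = (\<Sum>i\<in>{1..dd}. Re (mtr (P i ** X)) / (2 * sqrt (Re (mtr (P i ** \<rho>)))))"
    unfolding DV_def e by (rule sum_derivs(1)) (auto intro: nn z)
  show "D2V V \<rho> X = (\<Sum>i\<in>{1..dd}. -((Re (mtr (P i ** X)))^2 / (4 * Re (mtr (P i ** \<rho>)) * sqrt (Re (mtr (P i ** \<rho>))))))"
    unfolding D2V_def e by (rule sum_derivs(2)) (auto intro: nn z)
qed

lemma gen_formula:
  assumes V: "V = (\<lambda>\<rho>. \<Sum>i\<in>{1..dd}. sqrt (Re (mtr (P i ** \<rho>))))"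
    and h1: "\<forall>i\<le>dd. P i ** H0 = H0 ** P i" and h2: "\<forall>i\<le>dd. P i ** H = H ** P i"
    and h3: "\<forall>i\<le>dd. P i ** L = L ** P i"
    and C: "C = (\<Sum>l\<le>dd. cmult (c l) (P l))" and D: "D = (\<Sum>l\<le>dd. cmult (a l) (P l))"
    and rh: "madj \<rho> = \<rho>"
    and nn: "\<forall>i\<le>dd. 0 \<le> Re (mtr (P i ** \<rho>))"
  shows "gen H0 H L C D V \<rho> = -(1/2) * (\<Sum>i\<in>{1..dd}. sqrt (Re (mtr (P i ** \<rho>))) *
      ((Re (c i) - (\<Sum>l\<le>dd. Re (c l) * Re (mtr (P l ** \<rho>))))^2
       + (cmod (a i) - sqrt (\<Sum>l\<le>dd. (cmod (a l))^2 * Re (mtr (P l ** \<rho>))))^2))"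
proof -
  define p where "p l = Re (mtr (P l ** \<rho>))" for l
  define r where "r = (\<Sum>l\<le>dd. Re (c l) * p l)"
  define v where "v = (\<Sum>l\<le>dd. (cmod (a l))^2 * p l)"
  have V': "V = (\<lambda>\<rho>. \<Sum>i\<in>{1..dd}. sqrt (Re (mtr (P i ** \<rho>))))" by (rule V)
  have zr: "mtr (P l ** \<rho>) = of_real (p l)" if "l \<le> dd" for l
    unfolding p_def using tr_real[OF P_herm P_idem P_orth P_sum rh that] .
  have pn: "0 \<le> p l" if "l \<le> dd" for l using nn that p_def by simp
  have pn1: "0 \<le> p l" if "l \<in> {1..dd}" for l using pn that by simp
  have F0: "Re (mtr (P i ** Fop H0 H L C D \<rho>)) = 0" if "i \<in> {1..dd}" for i
    using tr_F[OF P_herm P_idem P_orth P_sum _ _ _ _ C D, of i H0 H L \<rho>] that h1 h2 h3 by simp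
  have DVF: "DV V \<rho> (Fop H0 H L C D \<rho>) = 0"
    using DV_formula(1)[OF V, of \<rho> "Fop H0 H L C D \<rho>"] F0 nn by simp
  have G0: "Re (mtr (P i ** Gop C \<rho>)) = 2 * p i * (Re (c i) - r)" if "i \<in> {1..dd}" for i
    using tr_G[OF P_herm P_idem P_orth P_sum _ rh C, of i] that unfolding p_def r_def by simp
  have D2G: "D2V V \<rho> (Gop C \<rho>) = (\<Sum>i\<in>{1..dd}. - (sqrt (p i) * (Re (c i) - r)^2))"
  proof -
    have "D2V V \<rho> (Gop C \<rho>) = (\<Sum>i\<in>{1..dd}. -((Re (mtr (P i ** Gop C \<rho>)))^2 / (4 * p i * sqrt (p i))))"
      unfolding p_def by (rule DV_formula(2)[OF V]) (auto simp: nn G0 p_def)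
    also have "\<dots> = (\<Sum>i\<in>{1..dd}. - (sqrt (p i) * (Re (c i) - r)^2))"
    proof (rule sum.cong)
      fix i assume i: "i \<in> {1..dd}"
      show "-((Re (mtr (P i ** Gop C \<rho>)))^2 / (4 * p i * sqrt (p i))) = - (sqrt (p i) * (Re (c i) - r)^2)"
      proof (cases "p i = 0")
        case True thus ?thesis by (simp add: G0[OF i])
      next
        case False
        hence pp: "p i > 0" using pn1[OF i] by simp
        have e1: "p i / sqrt (p i) = sqrt (p i)" by (rule real_div_sqrt) (use pp in simp)
        have e2: "(2 * p i * (Re (c i) - r))^2 / (4 * p i * sqrt (p i)) = (p i / sqrt (p i)) * (Re (c i) - r)^2"
          using pp by (simp add: power2_eq_square field_simps)
        show ?thesis by (simp only: G0[OF i] e2 e1)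
      qed
    qed simp
    finally show ?thesis .
  qed
  have vC: "vC D \<rho> = of_real v"
  proof -
    have "vC D \<rho> = (\<Sum>k\<le>dd. mtr (P k ** (D ** \<rho> ** madj D)))"
      unfolding vC_def by (rule tr_split[OF P_herm P_idem P_orth P_sum])
    also have "\<dots> = (\<Sum>k\<le>dd. of_real ((cmod (a k))^2 * p k))"
      by (rule sum.cong) (auto simp: tr_DrD[OF P_herm P_idem P_orth P_sum _ D] zr)
    finally show ?thesis by (simp add: v_def of_real_sum)
  qed
  have vn: "0 \<le> v" unfolding v_def by (intro sum_nonneg mult_nonneg_nonneg) (auto intro: pn)
  have jump: "(V (JC D \<rho>) - V \<rho> - DV V \<rho> (Hop D \<rho>)) * Re (vC D \<rho>)
      = (\<Sum>i\<in>{1..dd}. -(1/2) * sqrt (p i) * (cmod (a i) - sqrt v)^2)"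
  proof (cases "v = 0")
    case True
    have "(cmod (a l))^2 * p l = 0" if "l \<le> dd" for l
      using True unfolding v_def
      by (subst (asm) sum_nonneg_eq_0_iff) (auto intro!: mult_nonneg_nonneg pn that)
    hence "sqrt (p i) * (cmod (a i))^2 = 0" if "i \<in> {1..dd}" for i using that by fastforce
    hence "(\<Sum>i\<in>{1..dd}. -(1/2) * sqrt (p i) * (cmod (a i) - sqrt v)^2) = 0"
      using True by (intro sum.neutral) (simp add: mult.commute)
    thus ?thesis using True vC by simp
  next
    case False
    hence vp: "v > 0" using vn by simp
    define q where "q i = (cmod (a i))^2 * p i / v" for i
    have qe: "Re (mtr (P i ** JC D \<rho>)) = q i" if "i \<le> dd" for i
      unfolding JC_def q_def using that vp
      by (simp add: tr_DrD[OF P_herm P_idem P_orth P_sum _ D] zr vC)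
    have He: "Re (mtr (P i ** Hop D \<rho>)) = q i - p i" if "i \<le> dd" for i
      unfolding Hop_def using qe[OF that] by (simp add: mm_diff_left p_def)
    have VJ: "V (JC D \<rho>) = (\<Sum>i\<in>{1..dd}. sqrt (q i))" using qe by (simp add: V)
    have Vr: "V \<rho> = (\<Sum>i\<in>{1..dd}. sqrt (p i))" by (simp add: V p_def)
    have "DV V \<rho> (Hop D \<rho>) = (\<Sum>i\<in>{1..dd}. Re (mtr (P i ** Hop D \<rho>)) / (2 * sqrt (p i)))"
      unfolding p_def by (rule DV_formula(1)[OF V]) (auto simp: nn He q_def p_def)
    also have "\<dots> = (\<Sum>i\<in>{1..dd}. (q i - p i) / (2 * sqrt (p i)))"
      by (rule sum.cong) (auto simp: He)
    finally have DH: "DV V \<rho> (Hop D \<rho>) = (\<Sum>i\<in>{1..dd}. (q i - p i) / (2 * sqrt (p i)))" .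
    have "(V (JC D \<rho>) - V \<rho> - DV V \<rho> (Hop D \<rho>)) * Re (vC D \<rho>)
        = (\<Sum>i\<in>{1..dd}. v * (sqrt (q i) - sqrt (p i) - (q i - p i) / (2 * sqrt (p i))))"
      by (simp add: VJ Vr DH vC sum_subtractf[symmetric] sum_distrib_left mult.commute)
    also have "\<dots> = (\<Sum>i\<in>{1..dd}. -(1/2) * sqrt (p i) * (cmod (a i) - sqrt v)^2)"
    proof (rule sum.cong)
      fix i assume i: "i \<in> {1..dd}"
      show "v * (sqrt (q i) - sqrt (p i) - (q i - p i) / (2 * sqrt (p i))) = -(1/2) * sqrt (p i) * (cmod (a i) - sqrt v)^2"
        unfolding q_def by (rule jt[OF pn1[OF i] vp norm_ge_zero])
    qed simp
    finally show ?thesis .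
  qed
  have "gen H0 H L C D V \<rho> = - (1/2) * (\<Sum>i\<in>{1..dd}. sqrt (p i) * ((Re (c i) - r)^2 + (cmod (a i) - sqrt v)^2))"
    unfolding gen_def DVF D2G jump
    by (simp add: sum_distrib_left algebra_simps sum.distrib sum_negf)
  thus ?thesis by (simp add: p_def r_def v_def)
qed

end



definition qf :: "'n::finite op \<Rightarrow> complex^'n \<Rightarrow> complex^'n \<Rightarrow> complex" where
  "qf \<rho> u w = (\<Sum>i\<in>UNIV. \<Sum>j\<in>UNIV. cnj (u $ i) * \<rho> $ i $ j * w $ j)"

lemma real_quad_aux:
  fixes A B C :: real
  assumes "\<forall>t. 0 \<le> A - 2 * t * B + t^2 * B * C" "0 \<le> B" "0 \<le> A" "0 \<le> C"
  shows "B \<le> A * C"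
proof (cases "B = 0")
  case True thus ?thesis using assms by simp
next
  case False
  hence Bp: "B > 0" using assms by simp
  show ?thesis
  proof (cases "C = 0")
    case True
    have "0 \<le> A - 2 * ((A + 1) / (2 * B)) * B" using assms(1)[rule_format, of "(A+1)/(2*B)"] True by simp
    also have "\<dots> = -1" using Bp by (simp add: field_simps)
    finally show ?thesis by simp
  next
    case False
    hence Cp: "C > 0" using assms by simp
    have "0 \<le> A - 2 * (1/C) * B + (1/C)^2 * B * C" using assms(1) by blast
    also have "\<dots> = A - B / C" using Cp by (simp add: field_simps power2_eq_square)
    finally show ?thesis using Cp by (simp add: field_simps)
  qed
qed

lemma qf_expand:
  fixes \<rho> :: "'n::finite op"
  shows "qf \<rho> (\<chi> i. u$i + z * w$i) (\<chi> i. u$i + z * w$i) =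
    qf \<rho> u u + z * qf \<rho> u w + cnj z * qf \<rho> w u + z * cnj z * qf \<rho> w w"
proof -
  have e: "cnj (u$i + z * w$i) * \<rho>$i$j * (u$j + z * w$j) =
    cnj (u$i) * \<rho>$i$j * u$j + z * (cnj (u$i) * \<rho>$i$j * w$j) + cnj z * (cnj (w$i) * \<rho>$i$j * u$j)
    + z * cnj z * (cnj (w$i) * \<rho>$i$j * w$j)" for i j
    by (simp add: algebra_simps)
  show ?thesis unfolding qf_def
    by (simp only: vec_lambda_beta e sum.distrib sum_distrib_left[symmetric])
qed

lemma qf_herm:
  assumes "madj \<rho> = \<rho>"
  shows "qf \<rho> w u = cnj (qf \<rho> u w)"
proof -
  have h: "cnj (\<rho> $ i $ j) = \<rho> $ j $ i" for i j
    using assms by (metis madj_def vec_lambda_beta)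
  have "cnj (qf \<rho> u w) = (\<Sum>i\<in>UNIV. \<Sum>j\<in>UNIV. u$i * \<rho>$j$i * cnj (w$j))"
    unfolding qf_def by (simp add: cnj_sum h)
  also have "\<dots> = (\<Sum>j\<in>UNIV. \<Sum>i\<in>UNIV. u$i * \<rho>$j$i * cnj (w$j))" by (rule sum.swap)
  also have "\<dots> = qf \<rho> w u" unfolding qf_def by (simp add: ac_simps)
  finally show ?thesis by simp
qed

lemma cauchy_schwarz_qf:
  assumes herm: "madj \<rho> = \<rho>" and psd: "\<forall>v. 0 \<le> Re (qf \<rho> v v)"
  shows "(cmod (qf \<rho> u w))^2 \<le> Re (qf \<rho> u u) * Re (qf \<rho> w w)"
proof -
  define \<beta> where "\<beta> = qf \<rho> u w"
  have "0 \<le> Re (qf \<rho> u u) - 2 * t * (cmod \<beta>)^2 + t^2 * (cmod \<beta>)^2 * Re (qf \<rho> w w)" for t :: real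
  proof -
    define z where "z = - of_real t * cnj \<beta>"
    have "0 \<le> Re (qf \<rho> (\<chi> i. u$i + z * w$i) (\<chi> i. u$i + z * w$i))" using psd by blast
    also have "\<dots> = Re (qf \<rho> u u) + Re (z * \<beta>) + Re (cnj z * cnj \<beta>) + Re (z * cnj z * qf \<rho> w w)"
      by (simp only: qf_expand qf_herm[OF herm, of w u] \<beta>_def plus_complex.sel)
    also have "\<dots> = Re (qf \<rho> u u) - 2 * t * (cmod \<beta>)^2 + t^2 * (cmod \<beta>)^2 * Re (qf \<rho> w w)"
    proof -
      have nb: "\<beta> * cnj \<beta> = of_real ((cmod \<beta>)^2)" by (rule complex_norm_square[symmetric])
      have a: "z * \<beta> = - of_real (t * (cmod \<beta>)^2)"
      proof -
        have "z * \<beta> = - (of_real t * (\<beta> * cnj \<beta>))" unfolding z_def by (simp add: algebra_simps)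
        thus ?thesis by (simp only: nb of_real_mult)
      qed
      have b: "z * cnj z = of_real (t^2 * (cmod \<beta>)^2)"
      proof -
        have "z * cnj z = of_real t * of_real t * (\<beta> * cnj \<beta>)" unfolding z_def by (simp add: algebra_simps)
        thus ?thesis by (simp only: nb of_real_mult power2_eq_square)
      qed
      have c: "cnj z * cnj \<beta> = cnj (z * \<beta>)" by simp
      show ?thesis by (simp only: a b c) (simp add: algebra_simps)
    qed
    finally show ?thesis .
  qed
  hence "(cmod \<beta>)^2 \<le> Re (qf \<rho> u u) * Re (qf \<rho> w w)"
    using psd by (intro real_quad_aux) auto
  thus ?thesis by (simp add: \<beta>_def)
qed

lemma entry_qf: "(A ** \<rho> ** B)$k$l = qf \<rho> (\<chi> m. cnj (A$k$m)) (\<chi> n. B$n$l)"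
  unfolding qf_def matrix_matrix_mult_def
  by (simp add: sum_distrib_right, subst sum.swap, simp add: mult.assoc)

lemma diag_qf1: "(A ** \<rho> ** madj A)$k$k = qf \<rho> (\<chi> m. cnj (A$k$m)) (\<chi> m. cnj (A$k$m))"
  by (simp add: entry_qf madj_def)

lemma diag_qf2: "(madj B ** \<rho> ** B)$l$l = qf \<rho> (\<chi> n. B$n$l) (\<chi> n. B$n$l)"
  by (simp add: entry_qf madj_def)

lemma density_psd: "is_density \<rho> \<Longrightarrow> \<forall>v. 0 \<le> Re (qf \<rho> v v)"
  unfolding is_density_def qf_def by (simp add: mult.assoc)

lemma diag_le_tr:
  assumes "is_density \<rho>"
  shows "0 \<le> Re ((A ** \<rho> ** madj A)$k$k)" "Re ((A ** \<rho> ** madj A)$k$k) \<le> Re (mtr (A ** \<rho> ** madj A))"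
proof -
  have nn: "0 \<le> Re ((A ** \<rho> ** madj A)$k$k)" for k
    using density_psd[OF assms] by (simp add: diag_qf1)
  thus "0 \<le> Re ((A ** \<rho> ** madj A)$k$k)" .
  have "Re (mtr (A ** \<rho> ** madj A)) = (\<Sum>k\<in>UNIV. Re ((A ** \<rho> ** madj A)$k$k))"
    by (simp add: mtr_def)
  thus "Re ((A ** \<rho> ** madj A)$k$k) \<le> Re (mtr (A ** \<rho> ** madj A))"
    using member_le_sum[of k UNIV "\<lambda>k. Re ((A ** \<rho> ** madj A)$k$k)"] nn by simp
qed

lemma tr_psd_nonneg:
  assumes "is_density \<rho>"
  shows "0 \<le> Re (mtr (A ** \<rho> ** madj A))"
  using diag_le_tr[OF assms] by (simp add: mtr_def sum_nonneg)

lemma entry_bound: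
  assumes d: "is_density \<rho>"
  shows "(cmod ((A ** \<rho> ** B)$k$l))^2 \<le> Re (mtr (A ** \<rho> ** madj A)) * Re (mtr (madj B ** \<rho> ** B))"
proof -
  have herm: "madj \<rho> = \<rho>" using d by (simp add: is_density_def)
  have "(cmod ((A ** \<rho> ** B)$k$l))^2 \<le> Re ((A ** \<rho> ** madj A)$k$k) * Re ((madj B ** \<rho> ** B)$l$l)"
    apply (subst diag_qf1, subst diag_qf2, subst entry_qf)
    by (rule cauchy_schwarz_qf[OF herm density_psd[OF d]])
  also have "\<dots> \<le> Re (mtr (A ** \<rho> ** madj A)) * Re (mtr (madj B ** \<rho> ** B))"
    using diag_le_tr[OF d, of A k] diag_le_tr[OF d, of "madj B" l]
    by (intro mult_mono) auto
  finally show ?thesis .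
qed




lemma sqrt_sum_le:
  assumes "finite I" "\<And>i. i \<in> I \<Longrightarrow> 0 \<le> f i"
  shows "sqrt (\<Sum>i\<in>I. f i) \<le> (\<Sum>i\<in>I. sqrt (f i))"
  using assms
proof (induction I rule: finite_induct)
  case empty then show ?case by simp
next
  case (insert x F)
  have "sqrt (\<Sum>i\<in>insert x F. f i) = sqrt (f x + (\<Sum>i\<in>F. f i))" using insert by simp
  also have "\<dots> \<le> sqrt (f x) + sqrt (\<Sum>i\<in>F. f i)"
    by (rule sqrt_add_le_add_sqrt) (auto intro!: sum_nonneg insert.prems)
  also have "\<dots> \<le> sqrt (f x) + (\<Sum>i\<in>F. sqrt (f i))" using insert by simp
  finally show ?case using insert by simp
qed

lemma norm_le_entries: "norm (X::'n::finite op) \<le> (\<Sum>k\<in>UNIV. \<Sum>l\<in>UNIV. cmod (X$k$l))"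
proof -
  have "norm X \<le> (\<Sum>k\<in>UNIV. norm (X$k))"
    unfolding norm_vec_def by (rule L2_set_le_sum) auto
  also have "\<dots> \<le> (\<Sum>k\<in>UNIV. \<Sum>l\<in>UNIV. cmod (X$k$l))"
  proof (rule sum_mono)
    fix k :: 'n
    show "norm (X$k) \<le> (\<Sum>l\<in>UNIV. cmod (X$k$l))"
      unfolding norm_vec_def by (rule L2_set_le_sum) auto
  qed
  finally show ?thesis .
qed

lemma tr_bound:
  fixes Q X :: "'n::finite op"
  shows "cmod (mtr (Q ** X)) \<le> (\<Sum>i\<in>UNIV. \<Sum>j\<in>UNIV. cmod (Q$i$j)) * norm X"
proof -
  have "cmod (mtr (Q ** X)) \<le> (\<Sum>k\<in>UNIV. \<Sum>m\<in>UNIV. cmod (Q$k$m) * cmod (X$m$k))"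
    unfolding mtr_def matrix_matrix_mult_def
    by (simp, rule order_trans[OF norm_sum], rule sum_mono, rule order_trans[OF norm_sum])
       (simp add: norm_mult)
  also have "\<dots> \<le> (\<Sum>k\<in>UNIV. \<Sum>m\<in>UNIV. cmod (Q$k$m) * norm X)"
  proof (intro sum_mono mult_left_mono)
    fix k m
    show "cmod (X$m$k) \<le> norm X" using Finite_Cartesian_Product.norm_nth_le[of "X$m" k] Finite_Cartesian_Product.norm_nth_le[of X m] by linarith
  qed simp
  finally show ?thesis by (simp add: sum_distrib_right)
qed

context
  fixes P :: "nat \<Rightarrow> 'n::finite op" and dd :: nat
  assumes P_herm: "\<forall>i\<le>dd. madj (P i) = P i"
    and P_idem: "\<forall>i\<le>dd. P i ** P i = P i"
    and P_orth: "\<forall>i\<le>dd. \<forall>k\<le>dd. i \<noteq> k \<longrightarrow> P i ** P k = 0"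
    and P_sum: "(\<Sum>i\<le>dd. P i) = mat 1"
begin

lemma p_nonneg:
  assumes d: "is_density \<rho>" and i: "i \<le> dd"
  shows "0 \<le> Re (mtr (P i ** \<rho>))"
proof -
  have "mtr (P i ** \<rho>) = mtr ((P i ** P i) ** \<rho>)" using P_idem i by simp
  also have "\<dots> = mtr (P i ** \<rho> ** madj (P i))"
    using P_herm i by (metis matrix_mul_assoc mtr_comm)
  finally show ?thesis using tr_psd_nonneg[OF d] by simp
qed

lemma p_sum:
  assumes d: "is_density \<rho>"
  shows "(\<Sum>k\<le>dd. Re (mtr (P k ** \<rho>))) = 1"
proof -
  have "mtr \<rho> = 1" using d by (simp add: is_density_def)
  thus ?thesis using tr_split[OF P_herm P_idem P_orth P_sum, of \<rho>] by (metis one_complex.sel(1) Re_sum)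
qed

lemma p_rest:
  assumes d: "is_density \<rho>"
  shows "(\<Sum>k\<in>{1..dd}. Re (mtr (P k ** \<rho>))) = 1 - Re (mtr (P 0 ** \<rho>))"
proof -
  have "{..dd} = insert 0 {1..dd}" by auto
  hence "(\<Sum>k\<le>dd. Re (mtr (P k ** \<rho>))) = Re (mtr (P 0 ** \<rho>)) + (\<Sum>k\<in>{1..dd}. Re (mtr (P k ** \<rho>)))"
    by simp
  thus ?thesis using p_sum[OF d] by simp
qed

definition Qm :: "'n op" where "Qm = mat 1 - P 0"

lemma Q_herm: "madj Qm = Qm" using P_herm by (simp add: Qm_def)
lemma P0_idem: "P 0 ** P 0 = P 0" using P_idem by simp
lemma Q_idem: "Qm ** Qm = Qm" by (simp add: Qm_def mm_diff_left mm_diff_right P0_idem)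
lemma Q_P0: "Qm ** P 0 = 0" by (simp add: Qm_def mm_diff_right P0_idem)

lemma S_eq:
  assumes d: "is_density \<rho>"
  shows "Re (mtr (Qm ** \<rho>)) = 1 - Re (mtr (P 0 ** \<rho>))"
  using d by (simp add: Qm_def mm_diff_right is_density_def)

lemma S_psd:
  assumes d: "is_density \<rho>"
  shows "Re (mtr (Qm ** \<rho> ** madj Qm)) = 1 - Re (mtr (P 0 ** \<rho>))"
proof -
  have "mtr (Qm ** \<rho> ** madj Qm) = mtr ((Qm ** Qm) ** \<rho>)"
    by (metis Q_herm matrix_mul_assoc mtr_comm)
  thus ?thesis using S_eq[OF d] by (simp add: Q_idem)
qed

lemma X_eq: "\<rho> - P 0 ** \<rho> ** P 0 = Qm ** \<rho> + \<rho> ** Qm - Qm ** \<rho> ** Qm"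
  by (simp add: Qm_def mm_diff_left mm_diff_right matrix_mul_assoc algebra_simps)

lemma S_X: "mtr (Qm ** (\<rho> - P 0 ** \<rho> ** P 0)) = mtr (Qm ** \<rho>)"
proof -
  have "Qm ** (P 0 ** \<rho> ** P 0) = 0" by (simp add: matrix_mul_assoc Q_P0)
  thus ?thesis by (simp add: mm_diff_left)
qed

lemma tr_one: "is_density \<rho> \<Longrightarrow> Re (mtr (mat 1 ** \<rho> ** madj (mat 1))) = 1"
  by (simp add: is_density_def)

lemma entry_X:
  assumes d: "is_density \<rho>"
  shows "cmod ((\<rho> - P 0 ** \<rho> ** P 0)$k$l) \<le> 3 * sqrt (1 - Re (mtr (P 0 ** \<rho>)))"
proof -
  define S where "S = 1 - Re (mtr (P 0 ** \<rho>))"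
  have S0: "0 \<le> S" using S_psd[OF d] tr_psd_nonneg[OF d, of Qm] S_def by simp
  have S1: "S \<le> 1" using p_nonneg[OF d, of 0] S_def by simp
  have b1: "cmod ((Qm ** \<rho>)$k$l) \<le> sqrt S"
  proof -
    have "(cmod ((Qm ** \<rho> ** mat 1)$k$l))^2 \<le> S * 1"
      using entry_bound[OF d, of Qm "mat 1" k l] S_psd[OF d] tr_one[OF d] S_def by simp
    thus ?thesis by (simp add: real_le_rsqrt)
  qed
  have b2: "cmod ((\<rho> ** Qm)$k$l) \<le> sqrt S"
  proof -
    have "(cmod ((mat 1 ** \<rho> ** Qm)$k$l))^2 \<le> 1 * S"
      using entry_bound[OF d, of "mat 1" Qm k l] S_psd[OF d] tr_one[OF d] S_def Q_herm by simp
    thus ?thesis by (simp add: real_le_rsqrt)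
  qed
  have b3: "cmod ((Qm ** \<rho> ** Qm)$k$l) \<le> sqrt S"
  proof -
    have "(cmod ((Qm ** \<rho> ** Qm)$k$l))^2 \<le> S * S"
      using entry_bound[OF d, of Qm Qm k l] S_psd[OF d] S_def Q_herm by simp
    also have "\<dots> \<le> S" using S0 S1 by (simp add: mult_le_one mult_left_le)
    finally show ?thesis by (simp add: real_le_rsqrt)
  qed
  have "cmod ((\<rho> - P 0 ** \<rho> ** P 0)$k$l) \<le> cmod ((Qm ** \<rho>)$k$l) + cmod ((\<rho> ** Qm)$k$l) + cmod ((Qm ** \<rho> ** Qm)$k$l)"
    unfolding X_eq by (simp add: norm_triangle_le norm_diff_triangle_le norm_triangle_ineq4 order_trans[OF norm_triangle_ineq4] add_mono norm_triangle_ineq)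
  also have "\<dots> \<le> 3 * sqrt S" using b1 b2 b3 by simp
  finally show ?thesis by (simp add: S_def)
qed

lemma norm_X:
  assumes d: "is_density \<rho>"
  shows "norm (\<rho> - P 0 ** \<rho> ** P 0) \<le> (real CARD('n))^2 * 3 * sqrt (1 - Re (mtr (P 0 ** \<rho>)))"
proof -
  have "norm (\<rho> - P 0 ** \<rho> ** P 0) \<le> (\<Sum>k\<in>UNIV. \<Sum>l\<in>UNIV. cmod ((\<rho> - P 0 ** \<rho> ** P 0)$k$l))"
    by (rule norm_le_entries)
  also have "\<dots> \<le> (\<Sum>k\<in>(UNIV::'n set). \<Sum>l\<in>(UNIV::'n set). 3 * sqrt (1 - Re (mtr (P 0 ** \<rho>))))"
    by (intro sum_mono entry_X[OF d])
  finally show ?thesis by (simp add: power2_eq_square)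
qed

lemma S_le_norm:
  assumes d: "is_density \<rho>"
  shows "1 - Re (mtr (P 0 ** \<rho>)) \<le> (\<Sum>i\<in>UNIV. \<Sum>j\<in>UNIV. cmod (Qm$i$j)) * norm (\<rho> - P 0 ** \<rho> ** P 0)"
proof -
  have "1 - Re (mtr (P 0 ** \<rho>)) = Re (mtr (Qm ** (\<rho> - P 0 ** \<rho> ** P 0)))"
    using S_X S_eq[OF d] by simp
  also have "\<dots> \<le> cmod (mtr (Qm ** (\<rho> - P 0 ** \<rho> ** P 0)))" by (rule complex_Re_le_cmod)
  also have "\<dots> \<le> (\<Sum>i\<in>UNIV. \<Sum>j\<in>UNIV. cmod (Qm$i$j)) * norm (\<rho> - P 0 ** \<rho> ** P 0)" by (rule tr_bound)
  finally show ?thesis .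
qed

end



context
  fixes N :: "'n::finite op \<Rightarrow> real"
  assumes nrm: "is_op_norm N"
begin

lemma N_nonneg: "0 \<le> N X" using nrm by (simp add: is_op_norm_def)
lemma N_zero_iff: "N X = 0 \<longleftrightarrow> X = 0" using nrm by (simp add: is_op_norm_def)
lemma N_tri: "N (A + B) \<le> N A + N B" using nrm by (simp add: is_op_norm_def)
lemma N_cm: "N (cmult c A) = cmod c * N A" using nrm by (simp add: is_op_norm_def)

lemma N_scale: "N (r *\<^sub>R X) = \<bar>r\<bar> * N X"
  using N_cm[of "of_real r" X] by (simp add: cmult_of_real)

lemma N_sum: "finite S \<Longrightarrow> N (sum f S) \<le> (\<Sum>i\<in>S. N (f i))"
proof (induction S rule: finite_induct)
  case empty
  have "N 0 = 0" using N_zero_iff by simp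
  then show ?case by simp
next
  case (insert x F)
  then show ?case using N_tri[of "f x" "sum f F"] by simp
qed

lemma N_upper: "N X \<le> (\<Sum>b\<in>Basis. N b) * norm X"
proof -
  have "N X = N (\<Sum>b\<in>Basis. (X \<bullet> b) *\<^sub>R b)" by (simp add: euclidean_representation)
  also have "\<dots> \<le> (\<Sum>b\<in>Basis. N ((X \<bullet> b) *\<^sub>R b))" by (rule N_sum) simp
  also have "\<dots> \<le> (\<Sum>b\<in>Basis. norm X * N b)"
    by (intro sum_mono) (simp add: N_scale Basis_le_norm N_nonneg mult_right_mono)
  finally show ?thesis by (simp add: sum_distrib_left mult.commute)
qed

lemma N_minus: "N (A - B) = N (B - A)"
  using N_scale[of "-1" "B - A"] by simp

lemma N_lip: "\<bar>N X - N Y\<bar> \<le> (\<Sum>b\<in>Basis. N b) * norm (X - Y)"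
proof -
  have "N X \<le> N Y + N (X - Y)" using N_tri[of Y "X - Y"] by simp
  moreover have "N Y \<le> N X + N (X - Y)" using N_tri[of X "Y - X"] N_minus[of X Y] by simp
  moreover have "N (X - Y) \<le> (\<Sum>b\<in>Basis. N b) * norm (X - Y)" by (rule N_upper)
  ultimately show ?thesis by linarith
qed

lemma N_cont: "continuous_on S N"
proof -
  define K where "K = sum N (Basis :: 'n op set)"
  have "uniformly_continuous_on S N"
    unfolding uniformly_continuous_on_def
  proof (intro allI impI)
    fix e :: real assume e: "e > 0"
    show "\<exists>d>0. \<forall>x\<in>S. \<forall>x'\<in>S. dist x' x < d \<longrightarrow> dist (N x') (N x) < e"
    proof (intro exI[of _ "e / (K + 1)"] conjI ballI impI)
      have K0: "0 \<le> K" unfolding K_def by (intro sum_nonneg N_nonneg)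
      show "e / (K + 1) > 0" using e K0 by simp
      fix x x' assume "x \<in> S" "x' \<in> S" and dx: "dist x' x < e / (K + 1)"
      have "dist (N x') (N x) \<le> K * norm (x' - x)" using N_lip[of x' x] by (simp add: dist_real_def K_def)
      also have "\<dots> \<le> K * (e / (K + 1))" using dx K0 by (intro mult_left_mono) (auto simp: dist_norm)
      also have "\<dots> < e" using e K0 by (simp add: field_simps)
      finally show "dist (N x') (N x) < e" .
    qed
  qed
  thus ?thesis by (rule uniformly_continuous_imp_continuous)
qed

lemma N_lower: "\<exists>k>0. \<forall>X. k * norm X \<le> N X"
proof -
  have "compact (sphere (0::'n op) 1)" by simp
  moreover have "sphere (0::'n op) 1 \<noteq> {}" by simp
  ultimately obtain X0 where X0: "X0 \<in> sphere 0 1" and mn: "\<forall>Y\<in>sphere 0 1. N X0 \<le> N Y"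
    using continuous_attains_inf[OF _ _ N_cont] by blast
  have "X0 \<noteq> 0" using X0 by auto
  hence k0: "N X0 > 0" using N_zero_iff N_nonneg by (metis order_le_less)
  have "N X0 * norm X \<le> N X" for X
  proof (cases "X = 0")
    case True then show ?thesis using N_nonneg by simp
  next
    case False
    hence "(1 / norm X) *\<^sub>R X \<in> sphere 0 1" by simp
    hence "N X0 \<le> N ((1 / norm X) *\<^sub>R X)" using mn by blast
    also have "\<dots> = N X / norm X" by (simp add: N_scale)
    finally show ?thesis using False by (simp add: field_simps)
  qed
  thus ?thesis using k0 by blast
qed

end



lemma cont_madj: "continuous_on S (madj :: 'n::finite op \<Rightarrow> 'n op)"
  unfolding madj_def by (intro continuous_intros)

lemma cont_mtr: "continuous_on S (\<lambda>X::'n::finite op. mtr X)"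
  unfolding mtr_def by (intro continuous_intros)

lemma cont_sand: "continuous_on S (\<lambda>X::'n::finite op. X - A ** X ** B)"
  unfolding matrix_matrix_mult_def by (intro continuous_intros)

lemma closed_density: "closed {\<sigma>::'n::finite op. is_density \<sigma>}"
  unfolding is_density_def Collect_conj_eq
  by (intro closed_Int closed_Collect_eq closed_Collect_all closed_Collect_le cont_madj cont_mtr
      continuous_intros)


lemma wsum_bound:
  fixes p \<alpha> :: "nat \<Rightarrow> real"
  assumes "finite I" "\<And>k. k \<in> I \<Longrightarrow> 0 \<le> p k \<and> p k \<le> S"
  shows "\<bar>\<Sum>k\<in>I. \<alpha> k * p k\<bar> \<le> (\<Sum>k\<in>I. \<bar>\<alpha> k\<bar>) * S"
proof -
  have "\<bar>\<Sum>k\<in>I. \<alpha> k * p k\<bar> \<le> (\<Sum>k\<in>I. \<bar>\<alpha> k * p k\<bar>)" by (rule sum_abs)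
  also have "\<dots> \<le> (\<Sum>k\<in>I. \<bar>\<alpha> k\<bar> * S)"
    using assms by (intro sum_mono) (auto simp: abs_mult intro!: mult_left_mono)
  finally show ?thesis by (simp add: sum_distrib_right)
qed

lemma sq_shift: "(x::real)^2 / 2 - d^2 \<le> (x - d)^2"
proof -
  have "0 \<le> (x - 2*d)^2" by simp
  thus ?thesis by (simp add: power2_eq_square algebra_simps)
qed

lemma sqrt_diff_sq: "0 \<le> x \<Longrightarrow> 0 \<le> y \<Longrightarrow> (sqrt x - sqrt y)^2 \<le> \<bar>x - y\<bar>"
proof -
  have main: "(sqrt x - sqrt y)^2 \<le> x - y" if "0 \<le> y" "y \<le> x" for x y :: real
  proof -
    have "sqrt y \<le> sqrt x" using that by simp
    hence "sqrt y * sqrt y \<le> sqrt x * sqrt y" using that by (intro mult_right_mono) auto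
    thus ?thesis using that by (simp add: power2_eq_square algebra_simps)
  qed
  assume "0 \<le> x" "0 \<le> y"
  thus ?thesis
    using main[of y x] main[of x y] by (cases "y \<le> x") (auto simp: power2_commute)
qed

lemma core_bound:
  fixes p cr am :: "nat \<Rightarrow> real" and dd :: nat
  assumes dd: "1 \<le> dd" and pn: "\<forall>k\<le>dd. 0 \<le> p k" and ps: "(\<Sum>k\<le>dd. p k) = 1"
    and S: "S = (\<Sum>k\<in>{1..dd}. p k)"
    and cl: "cl = Min ((\<lambda>i. (cr i - cr 0)^2) ` {1..dd})"
    and al: "al = Min ((\<lambda>i. (am i - am 0)^2) ` {1..dd})"
    and amn: "\<forall>k. 0 \<le> am k"
    and small: "((\<Sum>k\<in>{1..dd}. \<bar>cr k - cr 0\<bar>)^2 + (\<Sum>k\<in>{1..dd}. \<bar>(am k)^2 - (am 0)^2\<bar>)) * S \<le> (cl + al) / 4"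
    and i: "i \<in> {1..dd}"
  shows "(cl + al) / 4 \<le> (cr i - (\<Sum>l\<le>dd. cr l * p l))^2 + (am i - sqrt (\<Sum>l\<le>dd. (am l)^2 * p l))^2"
proof -
  define Mc where "Mc = (\<Sum>k\<in>{1..dd}. \<bar>cr k - cr 0\<bar>)"
  define Ma where "Ma = (\<Sum>k\<in>{1..dd}. \<bar>(am k)^2 - (am 0)^2\<bar>)"
  have dec: "{..dd} = insert 0 {1..dd}" by auto
  have pS: "0 \<le> p k \<and> p k \<le> S" if "k \<in> {1..dd}" for k
  proof
    show "0 \<le> p k" using pn that by simp
    show "p k \<le> S" unfolding S using pn that by (intro member_le_sum) auto
  qed
  have S0: "0 \<le> S" unfolding S using pn by (intro sum_nonneg) auto
  have S1: "S \<le> 1" using ps pn[rule_format, of 0] unfolding S dec by simp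
  have Mc0: "0 \<le> Mc" unfolding Mc_def by (intro sum_nonneg) auto
  have Ma0: "0 \<le> Ma" unfolding Ma_def by (intro sum_nonneg) auto
  have clx: "cl \<le> (cr i - cr 0)^2" unfolding cl using i by (intro Min_le) auto
  have alx: "al \<le> (am i - am 0)^2" unfolding al using i by (intro Min_le) auto
  define d1 where "d1 = (\<Sum>l\<le>dd. cr l * p l) - cr 0"
  have d1e: "d1 = (\<Sum>k\<in>{1..dd}. (cr k - cr 0) * p k)"
  proof -
    have "cr 0 = cr 0 * (\<Sum>k\<le>dd. p k)" using ps by simp
    hence "d1 = (\<Sum>l\<le>dd. (cr l - cr 0) * p l)"
      unfolding d1_def by (simp add: sum_distrib_left left_diff_distrib sum_subtractf)
    thus ?thesis unfolding dec by simp
  qed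
  have d1b: "\<bar>d1\<bar> \<le> Mc * S" unfolding d1e Mc_def by (rule wsum_bound) (auto simp: pS)
  have d1sq: "d1^2 \<le> Mc^2 * S"
  proof -
    have "d1^2 \<le> (Mc * S)^2" using d1b by (metis abs_ge_zero power2_abs power_mono)
    also have "\<dots> = Mc^2 * S * S" by (simp add: power2_eq_square)
    also have "\<dots> \<le> Mc^2 * S * 1" using S0 S1 by (intro mult_left_mono) auto
    finally show ?thesis by simp
  qed
  have cpart: "cl / 2 - Mc^2 * S \<le> (cr i - (\<Sum>l\<le>dd. cr l * p l))^2"
  proof -
    have e: "(cr i - (\<Sum>l\<le>dd. cr l * p l)) = (cr i - cr 0) - d1" unfolding d1_def by simp
    have "(cr i - cr 0)^2 / 2 - d1^2 \<le> ((cr i - cr 0) - d1)^2" by (rule sq_shift)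
    thus ?thesis unfolding e using clx d1sq by linarith
  qed
  define v where "v = (\<Sum>l\<le>dd. (am l)^2 * p l)"
  have v0: "0 \<le> v" unfolding v_def using pn by (intro sum_nonneg) auto
  have ve: "v - (am 0)^2 = (\<Sum>k\<in>{1..dd}. ((am k)^2 - (am 0)^2) * p k)"
  proof -
    have "(am 0)^2 = (am 0)^2 * (\<Sum>k\<le>dd. p k)" using ps by simp
    hence "v - (am 0)^2 = (\<Sum>l\<le>dd. ((am l)^2 - (am 0)^2) * p l)"
      unfolding v_def by (simp add: sum_distrib_left left_diff_distrib sum_subtractf)
    thus ?thesis unfolding dec by simp
  qed
  have vb: "\<bar>v - (am 0)^2\<bar> \<le> Ma * S" unfolding ve Ma_def by (rule wsum_bound) (auto simp: pS)
  define d2 where "d2 = sqrt v - am 0"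
  have d2sq: "d2^2 \<le> Ma * S"
  proof -
    have "am 0 = sqrt ((am 0)^2)" using amn by simp
    hence "d2^2 \<le> \<bar>v - (am 0)^2\<bar>" unfolding d2_def using sqrt_diff_sq[OF v0, of "(am 0)^2"] by simp
    thus ?thesis using vb by simp
  qed
  have apart: "al / 2 - Ma * S \<le> (am i - sqrt v)^2"
  proof -
    have e: "am i - sqrt v = (am i - am 0) - d2" unfolding d2_def by simp
    have "(am i - am 0)^2 / 2 - d2^2 \<le> ((am i - am 0) - d2)^2" by (rule sq_shift)
    thus ?thesis unfolding e using alx d2sq by linarith
  qed
  have "(cl + al) / 4 \<le> cl / 2 - Mc^2 * S + (al / 2 - Ma * S)"
    using small unfolding Mc_def[symmetric] Ma_def[symmetric] by (simp add: field_simps)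
  also have "\<dots> \<le> (cr i - (\<Sum>l\<le>dd. cr l * p l))^2 + (am i - sqrt v)^2"
    using cpart apart by simp
  finally show ?thesis unfolding v_def .
qed


theorem lemma5:
  fixes P :: "nat \<Rightarrow> 'n::finite op"
    and dd m j :: nat
    and H0 :: "'n op"
    and Hk Lk Ck Dk :: "nat \<Rightarrow> 'n op"
    and c a :: "nat \<Rightarrow> complex"
    and N :: "'n op \<Rightarrow> real"
    and d0 V :: "'n op \<Rightarrow> real"
    and cl al :: real
  assumes norm: "is_op_norm N"
    and dd_pos: "1 \<le> dd" and dd_le: "dd \<le> CARD('n) - 1"
    and P_herm: "\<forall>i\<le>dd. madj (P i) = P i"
    and P_idem: "\<forall>i\<le>dd. P i ** P i = P i"
    and P_orth: "\<forall>i\<le>dd. \<forall>k\<le>dd. i \<noteq> k \<longrightarrow> P i ** P k = 0"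
    and P_nz: "\<forall>i\<le>dd. P i \<noteq> 0"
    and P_sum: "(\<Sum>i\<le>dd. P i) = mat 1"
    and j: "1 \<le> j" "j \<le> m"
    and H0_sa: "madj H0 = H0"
    and Hk_sa: "\<forall>k\<in>{1..m}. madj (Hk k) = Hk k"
    and H0_bd: "\<forall>i\<le>dd. P i ** H0 = H0 ** P i"
    and Hj_bd: "\<forall>i\<le>dd. P i ** Hk j = Hk j ** P i"
    and Lj_bd: "\<forall>i\<le>dd. P i ** Lk j = Lk j ** P i"
    and Cj: "Ck j = (\<Sum>i\<le>dd. cmult (c i) (P i))"
    and Dj: "Dk j = (\<Sum>i\<le>dd. cmult (a i) (P i))"
    and cl_def: "cl = Min ((\<lambda>i. (Re (c i) - Re (c 0))\<^sup>2) ` {1..dd})"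
    and al_def: "al = Min ((\<lambda>i. (cmod (a i) - cmod (a 0))\<^sup>2) ` {1..dd})"
    and pos: "cl > 0 \<or> al > 0"
    and d0_def: "\<And>\<rho>. d0 \<rho> = N (\<rho> - P 0 ** \<rho> ** P 0)"
    and V_def: "\<And>\<rho>. V \<rho> = (\<Sum>i\<in>{1..dd}. sqrt (Re (mtr (P i ** \<rho>))))"
  shows
    "(\<exists>c1 c2. 0 < c1 \<and> 0 < c2 \<and>
        (\<forall>\<rho>. is_density \<rho> \<longrightarrow> d0 \<rho> / c2 \<le> V \<rho> \<and> V \<rho> \<le> sqrt (d0 \<rho> / c1)))
     \<and> (\<exists>rb>0. \<forall>l. 0 < l \<and> l < rb \<longrightarrow>
          (\<exists>cL. 0 < cL \<and> cL < (cl + al) / 2 \<and>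
             (\<forall>\<rho>. is_density \<rho> \<and> d0 \<rho> < l \<longrightarrow>
                gen H0 (Hk j) (Lk j) (Ck j) (Dk j) V \<rho> \<le> - cL * V \<rho>)))
     \<and> (\<exists>\<mu>1 \<mu>2 \<nu> l. classK \<mu>1 \<and> classK \<mu>2 \<and> classK \<nu> \<and> 0 < l \<and>
          (\<forall>\<rho>\<in>closure {\<sigma>. is_density \<sigma> \<and> d0 \<sigma> < l}.
             \<mu>1 (d0 \<rho>) \<le> V \<rho> \<and> V \<rho> \<le> \<mu>2 (d0 \<rho>) \<and>
             gen H0 (Hk j) (Lk j) (Ck j) (Dk j) V \<rho> \<le> - \<nu> (d0 \<rho>)))"
proof -
  note ctx = P_herm P_idem P_orth P_sum
  have Vfun: "V = (\<lambda>\<rho>. \<Sum>i\<in>{1..dd}. sqrt (Re (mtr (P i ** \<rho>))))"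
    using V_def by (intro ext) simp
  define S where "S \<rho> = 1 - Re (mtr (P 0 ** \<rho>))" for \<rho>
  obtain kN where kN: "kN > 0" "\<And>X. kN * norm X \<le> N X" using N_lower[OF norm] by blast
  define KN where "KN = sum N (Basis :: 'n op set)"
  have KN0: "0 \<le> KN" unfolding KN_def by (intro sum_nonneg N_nonneg[OF norm])
  define KQ where "KQ = (\<Sum>i\<in>UNIV. \<Sum>j\<in>UNIV. cmod (Qm P $i$j))"
  have KQ0: "0 \<le> KQ" unfolding KQ_def by (intro sum_nonneg) auto
  define Kd where "Kd = (KQ + 1) / kN"
  have Kd0: "0 < Kd" using kN KQ0 by (simp add: Kd_def)
  have d0n: "0 \<le> d0 \<rho>" for \<rho> using d0_def N_nonneg[OF norm] by simp
  have pn: "0 \<le> Re (mtr (P i ** \<rho>))" if "is_density \<rho>" "i \<le> dd" for \<rho> i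
    using p_nonneg[OF ctx that] .
  have Srest: "S \<rho> = (\<Sum>k\<in>{1..dd}. Re (mtr (P k ** \<rho>)))" if "is_density \<rho>" for \<rho>
    using p_rest[OF ctx that] S_def by simp
  have S0: "0 \<le> S \<rho>" if "is_density \<rho>" for \<rho>
    unfolding Srest[OF that] using pn[OF that] by (intro sum_nonneg) auto
  have Sle: "S \<rho> \<le> Kd * d0 \<rho>" if d: "is_density \<rho>" for \<rho>
  proof -
    have "S \<rho> \<le> KQ * norm (\<rho> - P 0 ** \<rho> ** P 0)"
      using S_le_norm[OF ctx d] S_def KQ_def by simp
    also have "\<dots> \<le> KQ * (d0 \<rho> / kN)"
      using kN(2)[of "\<rho> - P 0 ** \<rho> ** P 0"] kN(1) KQ0 d0_def
      by (intro mult_left_mono) (auto simp: field_simps)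
    also have "\<dots> \<le> (KQ + 1) * (d0 \<rho> / kN)"
      using d0n[of \<rho>] kN(1) by (intro mult_right_mono) auto
    finally show ?thesis by (simp add: Kd_def)
  qed
  have d0le: "d0 \<rho> \<le> KN * (real CARD('n))^2 * 3 * sqrt (S \<rho>)" if d: "is_density \<rho>" for \<rho>
  proof -
    have "d0 \<rho> \<le> KN * norm (\<rho> - P 0 ** \<rho> ** P 0)"
      using N_upper[OF norm] d0_def KN_def by simp
    also have "\<dots> \<le> KN * ((real CARD('n))^2 * 3 * sqrt (S \<rho>))"
      using norm_X[OF ctx d] S_def KN0 by (intro mult_left_mono) auto
    finally show ?thesis by simp
  qed
  have Vge: "sqrt (S \<rho>) \<le> V \<rho>" if d: "is_density \<rho>" for \<rho>
    unfolding Srest[OF d] V_def using pn[OF d] by (intro sqrt_sum_le) auto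
  have Vle: "V \<rho> \<le> real dd * sqrt (S \<rho>)" if d: "is_density \<rho>" for \<rho>
  proof -
    have "V \<rho> \<le> (\<Sum>i\<in>{1..dd}. sqrt (S \<rho>))"
      unfolding V_def
    proof (intro sum_mono real_sqrt_le_mono)
      fix i assume "i \<in> {1..dd}"
      thus "Re (mtr (P i ** \<rho>)) \<le> S \<rho>"
        unfolding Srest[OF d] using pn[OF d] by (intro member_le_sum) auto
    qed
    thus ?thesis by simp
  qed
  define c1 where "c1 = 1 / ((real dd)^2 * Kd)"
  define c2 where "c2 = KN * (real CARD('n))^2 * 3 + 1"
  have c1p: "0 < c1" using dd_pos Kd0 by (simp add: c1_def)
  have c2p: "0 < c2" using KN0 by (simp add: c2_def add_nonneg_pos)
  have part1: "\<forall>\<rho>. is_density \<rho> \<longrightarrow> d0 \<rho> / c2 \<le> V \<rho> \<and> V \<rho> \<le> sqrt (d0 \<rho> / c1)"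
  proof (intro allI impI conjI)
    fix \<rho> :: "'n op" assume d: "is_density \<rho>"
    have "d0 \<rho> \<le> (c2 - 1) * sqrt (S \<rho>)" using d0le[OF d] by (simp add: c2_def)
    also have "\<dots> \<le> c2 * sqrt (S \<rho>)" using S0[OF d] by (simp add: algebra_simps)
    also have "\<dots> \<le> c2 * V \<rho>" using Vge[OF d] c2p by simp
    finally show "d0 \<rho> / c2 \<le> V \<rho>" using c2p by (simp add: field_simps)
    have "V \<rho> \<le> real dd * sqrt (S \<rho>)" by (rule Vle[OF d])
    also have "\<dots> = sqrt ((real dd)^2 * S \<rho>)" by (simp add: real_sqrt_mult)
    also have "\<dots> \<le> sqrt ((real dd)^2 * (Kd * d0 \<rho>))"
      using Sle[OF d] by (intro real_sqrt_le_mono mult_left_mono) auto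
    also have "\<dots> = sqrt (d0 \<rho> / c1)" using Kd0 dd_pos by (simp add: c1_def field_simps)
    finally show "V \<rho> \<le> sqrt (d0 \<rho> / c1)" .
  qed
  have cl0: "0 \<le> cl" unfolding cl_def using dd_pos by (subst Min_ge_iff) auto
  have al0: "0 \<le> al" unfolding al_def using dd_pos by (subst Min_ge_iff) auto
  have clal: "0 < cl + al" using cl0 al0 pos by auto
  define Mc where "Mc = (\<Sum>k\<in>{1..dd}. \<bar>Re (c k) - Re (c 0)\<bar>)"
  define Ma where "Ma = (\<Sum>k\<in>{1..dd}. \<bar>(cmod (a k))^2 - (cmod (a 0))^2\<bar>)"
  have Mc0: "0 \<le> Mc" unfolding Mc_def by (intro sum_nonneg) auto
  have Ma0: "0 \<le> Ma" unfolding Ma_def by (intro sum_nonneg) auto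
  define rb where "rb = (cl + al) / (4 * (Mc^2 + Ma + 1) * Kd)"
  have Mp: "0 < Mc^2 + Ma + 1" using Ma0 zero_le_power2[of Mc] by linarith
  have rbp: "0 < rb" unfolding rb_def using clal Kd0 Mp by (intro divide_pos_pos mult_pos_pos) auto
  define cL where "cL = (cl + al) / 8"
  have core: "gen H0 (Hk j) (Lk j) (Ck j) (Dk j) V \<rho> \<le> - cL * V \<rho>"
    if d: "is_density \<rho>" and small: "d0 \<rho> < rb" for \<rho>
  proof -
    have rh: "madj \<rho> = \<rho>" using d by (simp add: is_density_def)
    define p where "p k = Re (mtr (P k ** \<rho>))" for k
    have "S \<rho> \<le> Kd * rb" using Sle[OF d] small Kd0 by (meson less_eq_real_def mult_left_mono order_trans)
    also have "\<dots> = (cl + al) / (4 * (Mc^2 + Ma + 1))" unfolding rb_def using Kd0 by simp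
    finally have Ssm: "S \<rho> \<le> (cl + al) / (4 * (Mc^2 + Ma + 1))" .
    have sm: "(Mc^2 + Ma) * S \<rho> \<le> (cl + al) / 4"
    proof -
      have "(Mc^2 + Ma) * S \<rho> \<le> (Mc^2 + Ma + 1) * S \<rho>" using S0[OF d] by (intro mult_right_mono) auto
      also have "\<dots> \<le> (Mc^2 + Ma + 1) * ((cl + al) / (4 * (Mc^2 + Ma + 1)))"
        using Ssm Mp by (intro mult_left_mono) auto
      also have "\<dots> = (cl + al) / 4" using Mp by (simp add: field_simps)
      finally show ?thesis .
    qed
    have T: "(cl + al) / 4 \<le> (Re (c i) - (\<Sum>l\<le>dd. Re (c l) * p l))^2 + (cmod (a i) - sqrt (\<Sum>l\<le>dd. (cmod (a l))^2 * p l))^2"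
      if i: "i \<in> {1..dd}" for i
    proof (rule core_bound[OF dd_pos _ _ _ _ _ _ _ i, where S="S \<rho>"])
      show "\<forall>k\<le>dd. 0 \<le> p k" using pn[OF d] p_def by simp
      show "(\<Sum>k\<le>dd. p k) = 1" using p_sum[OF ctx d] p_def by simp
      show "S \<rho> = (\<Sum>k\<in>{1..dd}. p k)" using Srest[OF d] p_def by simp
      show "cl = Min ((\<lambda>i. (Re (c i) - Re (c 0))^2) ` {1..dd})" by (rule cl_def)
      show "al = Min ((\<lambda>i. (cmod (a i) - cmod (a 0))^2) ` {1..dd})" by (rule al_def)
      show "\<forall>k. 0 \<le> cmod (a k)" by simp
      show "((\<Sum>k\<in>{1..dd}. \<bar>Re (c k) - Re (c 0)\<bar>)^2 + (\<Sum>k\<in>{1..dd}. \<bar>(cmod (a k))^2 - (cmod (a 0))^2\<bar>)) * S \<rho> \<le> (cl + al) / 4"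
        using sm unfolding Mc_def Ma_def .
    qed
    have "gen H0 (Hk j) (Lk j) (Ck j) (Dk j) V \<rho> = -(1/2) * (\<Sum>i\<in>{1..dd}. sqrt (p i) *
      ((Re (c i) - (\<Sum>l\<le>dd. Re (c l) * p l))^2 + (cmod (a i) - sqrt (\<Sum>l\<le>dd. (cmod (a l))^2 * p l))^2))"
      unfolding p_def
      by (rule gen_formula[OF ctx Vfun H0_bd Hj_bd Lj_bd Cj Dj rh]) (use pn[OF d] in auto)
    also have "\<dots> \<le> -(1/2) * (\<Sum>i\<in>{1..dd}. sqrt (p i) * ((cl + al) / 4))"
    proof -
      have "(\<Sum>i\<in>{1..dd}. sqrt (p i) * ((cl + al) / 4)) \<le> (\<Sum>i\<in>{1..dd}. sqrt (p i) *
        ((Re (c i) - (\<Sum>l\<le>dd. Re (c l) * p l))^2 + (cmod (a i) - sqrt (\<Sum>l\<le>dd. (cmod (a l))^2 * p l))^2))"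
      proof (rule sum_mono)
        fix i assume i: "i \<in> {1..dd}"
        have "0 \<le> sqrt (p i)" using pn[OF d, of i] i p_def by simp
        thus "sqrt (p i) * ((cl + al) / 4) \<le> sqrt (p i) *
          ((Re (c i) - (\<Sum>l\<le>dd. Re (c l) * p l))^2 + (cmod (a i) - sqrt (\<Sum>l\<le>dd. (cmod (a l))^2 * p l))^2)"
          by (rule mult_left_mono[OF T[OF i]])
      qed
      thus ?thesis by linarith
    qed
    also have "\<dots> = - cL * V \<rho>"
    proof -
      have "(\<Sum>i\<in>{1..dd}. sqrt (p i) * ((cl + al) / 4)) = V \<rho> * ((cl + al) / 4)"
        by (simp add: V_def p_def sum_distrib_right)
      thus ?thesis unfolding cL_def by (simp only: mult.commute)
    qed
    finally show ?thesis .
  qed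
  have part2: "\<exists>rb>0. \<forall>l. 0 < l \<and> l < rb \<longrightarrow>
          (\<exists>cL. 0 < cL \<and> cL < (cl + al) / 2 \<and>
             (\<forall>\<rho>. is_density \<rho> \<and> d0 \<rho> < l \<longrightarrow>
                gen H0 (Hk j) (Lk j) (Ck j) (Dk j) V \<rho> \<le> - cL * V \<rho>))"
  proof (rule exI[of _ rb], intro conjI allI impI rbp)
    fix l assume l: "0 < l \<and> l < rb"
    show "\<exists>cL. 0 < cL \<and> cL < (cl + al) / 2 \<and>
             (\<forall>\<rho>. is_density \<rho> \<and> d0 \<rho> < l \<longrightarrow>
                gen H0 (Hk j) (Lk j) (Ck j) (Dk j) V \<rho> \<le> - cL * V \<rho>)"
      using clal l core by (intro exI[of _ cL]) (auto simp: cL_def)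
  qed
  have cont_d0: "continuous_on UNIV d0"
  proof -
    have "continuous_on UNIV (\<lambda>\<sigma>. N (\<sigma> - P 0 ** \<sigma> ** P 0))"
      by (rule continuous_on_compose2[OF N_cont[OF norm] cont_sand]) auto
    moreover have "d0 = (\<lambda>\<sigma>. N (\<sigma> - P 0 ** \<sigma> ** P 0))" using d0_def by (intro ext) simp
    ultimately show ?thesis by simp
  qed
  have clo: "closure {\<sigma>. is_density \<sigma> \<and> d0 \<sigma> < rb / 2} \<subseteq> {\<sigma>. is_density \<sigma> \<and> d0 \<sigma> \<le> rb / 2}"
  proof (rule closure_minimal)
    show "{\<sigma>. is_density \<sigma> \<and> d0 \<sigma> < rb / 2} \<subseteq> {\<sigma>. is_density \<sigma> \<and> d0 \<sigma> \<le> rb / 2}" by auto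
    show "closed {\<sigma>. is_density \<sigma> \<and> d0 \<sigma> \<le> rb / 2}"
      unfolding Collect_conj_eq
      by (intro closed_Int closed_density closed_Collect_le cont_d0 continuous_intros)
  qed
  define \<mu>1 where "\<mu>1 = (\<lambda>r::real. r / c2)"
  define \<mu>2 where "\<mu>2 = (\<lambda>r::real. sqrt (r / c1))"
  define \<nu> where "\<nu> = (\<lambda>r::real. cL * (r / c2))"
  have cLp: "0 < cL" using clal by (simp add: cL_def)
  have K1: "classK \<mu>1" unfolding classK_def \<mu>1_def using c2p
    by (auto intro!: continuous_intros mono_onI divide_right_mono)
  have K2: "classK \<mu>2" unfolding classK_def \<mu>2_def using c1p
    by (auto intro!: continuous_intros mono_onI divide_right_mono)
  have K3: "classK \<nu>" unfolding classK_def \<nu>_def using c2p cLp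
    by (auto intro!: continuous_intros mono_onI divide_right_mono mult_left_mono)
  have part3: "\<exists>\<mu>1 \<mu>2 \<nu> l. classK \<mu>1 \<and> classK \<mu>2 \<and> classK \<nu> \<and> 0 < l \<and>
          (\<forall>\<rho>\<in>closure {\<sigma>. is_density \<sigma> \<and> d0 \<sigma> < l}.
             \<mu>1 (d0 \<rho>) \<le> V \<rho> \<and> V \<rho> \<le> \<mu>2 (d0 \<rho>) \<and>
             gen H0 (Hk j) (Lk j) (Ck j) (Dk j) V \<rho> \<le> - \<nu> (d0 \<rho>))"
  proof (rule exI[of _ \<mu>1], rule exI[of _ \<mu>2], rule exI[of _ \<nu>], rule exI[of _ "rb / 2"], intro conjI K1 K2 K3 ballI)
    show "0 < rb / 2" using rbp by simp
    fix \<rho> :: "'n op" assume "\<rho> \<in> closure {\<sigma>. is_density \<sigma> \<and> d0 \<sigma> < rb / 2}"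
    hence d: "is_density \<rho>" and dl: "d0 \<rho> \<le> rb / 2" using clo by auto
    show "\<mu>1 (d0 \<rho>) \<le> V \<rho>" using part1 d by (simp add: \<mu>1_def)
    show "V \<rho> \<le> \<mu>2 (d0 \<rho>)" using part1 d by (simp add: \<mu>2_def)
    have "gen H0 (Hk j) (Lk j) (Ck j) (Dk j) V \<rho> \<le> - cL * V \<rho>" using core[OF d] dl rbp by simp
    also have "\<dots> \<le> - cL * (d0 \<rho> / c2)"
    proof -
      have "d0 \<rho> / c2 \<le> V \<rho>" using part1 d by blast
      hence "cL * (d0 \<rho> / c2) \<le> cL * V \<rho>" using cLp by (intro mult_left_mono) auto
      thus ?thesis by simp
    qed
    finally show "gen H0 (Hk j) (Lk j) (Ck j) (Dk j) V \<rho> \<le> - \<nu> (d0 \<rho>)" by (simp add: \<nu>_def)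
  qed
  show ?thesis using part1 part2 part3 c1p c2p by blast
qed

end
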